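(* Let $\mathcal{H}$ be a complex Hilbert space and $A,B,C,D\in\mathcal{B}(\mathcal{H})$. Then for every $0\le\alpha\le1$, $$\begin{aligned}w^4\left(\begin{bmatrix}A & B\\ C & D\end{bmatrix}\right)\le{}& 8\max\{w^4(A),w^4(D)\}+(1+\alpha)\max\left\{\big\||B|^4+|C^*|^4\big\|,\ \big\||B^*|^4+|C|^4\big\|\right\}\\&+2(1-\alpha)\max\{w^2(BC),w^2(CB)\}\\&+2\max\left\{\big\||B|^2+|C^*|^2\big\|,\ \big\||B^*|^2+|C|^2\big\|\right\}\cdot\max\{w(BC),w(CB)\}.\end{aligned}$$
   Context: $\mathcal{B}(\mathcal{H})$ is the algebra of bounded linear operators on $\mathcal{H}$ with operator norm $\|\cdot\|$. For $T\in\mathcal{B}(\mathcal{H})$, $T^*$ is the adjoint, $|T|=(T^*T)^{1/2}$, $|T^*|=(TT^* )^{1/2}$, and $w(T)=\sup_{\|x\|=1}|\langle Tx,x\rangle|$ is the numerical radius. The operator matrix $\begin{bmatrix}A&B\\C&D\end{bmatrix}$ acts on $\mathcal{H}\oplus\mathcal{H}$ by $(x_1,x_2)\mapsto(Ax_1+Bx_2,\,Cx_1+Dx_2)$. *)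

theory Defs
  imports "HOL-Analysis.Analysis"
begin

text \<open>Complex Hilbert spaces: a Banach space (over the reals, as in the library) equipped
  with a complex scalar multiplication compatible with the real one, and a complex inner
  product (linear in the first argument, conjugate symmetric) inducing the norm.\<close>

class chilbert = banach +
  fixes scaleC :: "complex \<Rightarrow> 'a \<Rightarrow> 'a"
    and cinner :: "'a \<Rightarrow> 'a \<Rightarrow> complex"
  assumes scaleC_of_real: "scaleC (of_real r) x = scaleR r x"
    and scaleC_add_right: "scaleC a (x + y) = scaleC a x + scaleC a y"
    and scaleC_add_left: "scaleC (a + b) x = scaleC a x + scaleC b x"
    and scaleC_scaleC: "scaleC a (scaleC b x) = scaleC (a * b) x"
    and scaleC_one: "scaleC 1 x = x"
    and cinner_add_left: "cinner (x + y) z = cinner x z + cinner y z"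
    and cinner_scaleC_left: "cinner (scaleC a x) y = a * cinner x y"
    and cinner_commute: "cinner y x = cnj (cinner x y)"
    and cinner_self_norm: "cinner x x = complex_of_real ((norm x)\<^sup>2)"

definition bounded_op :: "('a::chilbert \<Rightarrow> 'a) \<Rightarrow> bool" where
  "bounded_op T \<longleftrightarrow> bounded_linear T \<and> (\<forall>a x. T (scaleC a x) = scaleC a (T x))"

definition adj :: "('a::chilbert \<Rightarrow> 'a) \<Rightarrow> ('a \<Rightarrow> 'a)" where
  "adj T = (THE S. \<forall>x y. cinner (T x) y = cinner x (S y))"

definition op_plus :: "('a::chilbert \<Rightarrow> 'a) \<Rightarrow> ('a \<Rightarrow> 'a) \<Rightarrow> ('a \<Rightarrow> 'a)" where
  "op_plus S T = (\<lambda>x. S x + T x)"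

definition abs_sq :: "('a::chilbert \<Rightarrow> 'a) \<Rightarrow> ('a \<Rightarrow> 'a)" where
  "abs_sq T = adj T \<circ> T"

definition abs_adj_sq :: "('a::chilbert \<Rightarrow> 'a) \<Rightarrow> ('a \<Rightarrow> 'a)" where
  "abs_adj_sq T = T \<circ> adj T"

text \<open>Numerical radius (sup over the unit sphere; 0 is inserted so that the value is 0
  on the trivial space; it does not change the supremum otherwise).\<close>
definition nrad :: "('a::chilbert \<Rightarrow> 'a) \<Rightarrow> real" where
  "nrad T = Sup (insert 0 ((\<lambda>x. cmod (cinner (T x) x)) ` {x. norm x = 1}))"

text \<open>Numerical radius of the operator matrix [[A,B],[C,D]] acting on H \<oplus> H, with the
  direct-sum inner product <(x1,x2),(y1,y2)> = <x1,y1> + <x2,y2> and norm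
  ||(x1,x2)||^2 = ||x1||^2 + ||x2||^2.\<close>
definition block_nrad :: "('a::chilbert \<Rightarrow> 'a) \<Rightarrow> ('a \<Rightarrow> 'a) \<Rightarrow> ('a \<Rightarrow> 'a) \<Rightarrow> ('a \<Rightarrow> 'a) \<Rightarrow> real" where
  "block_nrad A B C D = Sup (insert 0
     ((\<lambda>(x1, x2). cmod (cinner (A x1 + B x2) x1 + cinner (C x1 + D x2) x2))
        ` {(x1, x2). (norm x1)\<^sup>2 + (norm x2)\<^sup>2 = 1}))"

end

theory Submission imports Defs begin


lemma cinner_add_right: "cinner x (y + z) = cinner x y + cinner x z"
  by (simp only: cinner_commute[where x="y+z" and y=x] cinner_add_left complex_cnj_add cinner_commute[where x=y and y=x] cinner_commute[where x=z and y=x])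

lemma cinner_scaleC_right: "cinner x (scaleC a y) = cnj a * cinner x y"
  by (simp only: cinner_commute[where x="scaleC a y" and y=x] cinner_scaleC_left complex_cnj_mult cinner_commute[where x=y and y=x])

lemma scaleC_real: "scaleC (complex_of_real r) x = r *\<^sub>R x" by (rule scaleC_of_real)

lemma cinner_scaleR_left: "cinner (r *\<^sub>R x) y = complex_of_real r * cinner x y"
  by (simp add: scaleC_of_real[symmetric] cinner_scaleC_left)

lemma cinner_scaleR_right: "cinner x (r *\<^sub>R y) = complex_of_real r * cinner x y"
  by (simp add: scaleC_of_real[symmetric] cinner_scaleC_right)

lemma cinner_zero_left[simp]: "cinner 0 y = 0"
  using cinner_scaleR_left[of 0 0 y] by simp

lemma cinner_zero_right[simp]: "cinner x 0 = 0"
  using cinner_scaleR_right[of x 0 0] by simp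

lemma cinner_minus_left: "cinner (- x) y = - cinner x y"
  using cinner_scaleR_left[of "-1" x y] by (simp add: scaleR_minus1_left)

lemma cinner_minus_right: "cinner x (- y) = - cinner x y"
  using cinner_scaleR_right[of x "-1" y] by (simp add: scaleR_minus1_left)

lemma cinner_diff_left: "cinner (x - y) z = cinner x z - cinner y z"
  using cinner_add_left[of x "-y" z] by (simp add: cinner_minus_left)

lemma cinner_diff_right: "cinner x (y - z) = cinner x y - cinner x z"
  using cinner_add_right[of x y "-z"] by (simp add: cinner_minus_right)

lemma scaleC_zero_right: "scaleC a 0 = 0"
proof -
  have "scaleC a 0 = scaleC a (scaleC (complex_of_real 0) 0)" by (simp only: scaleC_of_real scale_zero_left)
  also have "\<dots> = scaleC (complex_of_real 0) 0" by (simp add: scaleC_scaleC)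
  also have "\<dots> = 0" by (simp only: scaleC_of_real scale_zero_left)
  finally show ?thesis .
qed

lemma scaleC_minus_right: "scaleC a (- x) = - scaleC a x"
proof -
  have "scaleC a (- x) + scaleC a x = 0" by (simp add: scaleC_add_right[symmetric] scaleC_zero_right)
  then show ?thesis by (simp add: eq_neg_iff_add_eq_0)
qed

lemma scaleC_diff_right: "scaleC a (x - y) = scaleC a x - scaleC a y"
  using scaleC_add_right[of a x "-y"] by (simp add: scaleC_minus_right)


lemma cinner_self_real: "cinner x x = complex_of_real ((norm x)^2)" by (rule cinner_self_norm)

lemma cinner_eq_zero_iff: "cinner x x = 0 \<longleftrightarrow> x = 0"
  using cinner_self_norm[of x] by simp

lemma cnj_cinner: "cnj (cinner x y) = cinner y x" using cinner_commute[where x=x and y=y] by simp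

lemma expand_sq: "cinner (x - scaleC t y) (x - scaleC t y) =
   cinner x x - cnj t * cinner x y - t * cinner y x + t * cnj t * cinner y y"
  by (simp add: cinner_diff_left cinner_diff_right cinner_scaleC_left cinner_scaleC_right algebra_simps)

lemma cauchy_schwarz: "cmod (cinner x y) \<le> norm x * norm y"
proof (cases "y = 0")
  case True then show ?thesis by simp
next
  case False
  define \<nu> where "\<nu> = (norm y)^2"
  have nu: "\<nu> > 0" using False by (simp add: \<nu>_def)
  define c where "c = cinner x y"
  define t where "t = c / complex_of_real \<nu>"
  have "cinner (x - scaleC t y) (x - scaleC t y) =
     complex_of_real ((norm x)^2) - cnj t * c - t * cnj c + t * cnj t * complex_of_real \<nu>"
    unfolding expand_sq c_def \<nu>_def by (simp add: cinner_self_norm cinner_commute[where x=y and y=x])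
  also have "\<dots> = complex_of_real ((norm x)^2) - (c * cnj c) / complex_of_real \<nu>"
    using nu unfolding t_def
    by (simp add: field_simps)
  also have "\<dots> = complex_of_real ((norm x)^2 - (cmod c)^2 / \<nu>)"
    by (simp add: complex_norm_square[symmetric])
  finally have "complex_of_real ((norm (x - scaleC t y))^2) = complex_of_real ((norm x)^2 - (cmod c)^2 / \<nu>)"
    by (simp add: cinner_self_norm)
  then have "(norm (x - scaleC t y))^2 = (norm x)^2 - (cmod c)^2 / \<nu>" by (simp only: of_real_eq_iff)
  then have "(cmod c)^2 / \<nu> \<le> (norm x)^2" by (metis diff_ge_0_iff_ge zero_le_power2)
  then have "(cmod c)^2 \<le> (norm x)^2 * (norm y)^2" using nu by (simp add: \<nu>_def field_simps)
  then have "(cmod c)^2 \<le> (norm x * norm y)^2" by (simp add: power_mult_distrib)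
  then show ?thesis unfolding c_def by (meson abs_le_square_iff norm_ge_zero abs_of_nonneg mult_nonneg_nonneg power2_le_imp_le)
qed

lemma cinner_self_Re: "Re (cinner x x) = (norm x)^2" by (simp add: cinner_self_norm)

lemma cinner_eqI: assumes "\<And>z. cinner z x = cinner z y" shows "x = y"
proof -
  have "cinner (x - y) (x - y) = 0" using assms[of "x-y"]
    by (simp add: cinner_diff_right)
  then show ?thesis by (simp add: cinner_eq_zero_iff)
qed

lemma buzano:
  assumes "norm e = 1"
  shows "2 * cmod (cinner a e * cinner e b) \<le> norm a * norm b + cmod (cinner a b)"
proof -
  define c where "c = cinner a e"
  define u where "u = scaleC (2*c) e - a"
  have ee: "cinner e e = 1" using assms by (simp add: cinner_self_norm)
  have "cinner u u = 4 * (c * cnj c) * cinner e e - 2 * c * cinner e a - 2 * cnj c * cinner a e + cinner a a"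
    unfolding u_def by (simp add: cinner_diff_left cinner_diff_right cinner_scaleC_left cinner_scaleC_right algebra_simps)
  also have "\<dots> = cinner a a" using ee unfolding c_def
    by (simp add: cinner_commute[where x=e and y=a] algebra_simps)
  finally have "norm u = norm a" using cinner_self_norm[of u] cinner_self_norm[of a]
    by (metis norm_ge_zero of_real_eq_iff power2_eq_imp_eq)
  have "cinner u b = 2 * (c * cinner e b) - cinner a b"
    unfolding u_def by (simp add: cinner_diff_left cinner_scaleC_left)
  then have "cmod (2 * (c * cinner e b) - cinner a b) \<le> norm a * norm b"
    using cauchy_schwarz[of u b] \<open>norm u = norm a\<close> by simp
  then have "cmod (2 * (c * cinner e b)) \<le> norm a * norm b + cmod (cinner a b)"
  proof -
    have "cmod (2 * (c * cinner e b)) = cmod ((2 * (c * cinner e b) - cinner a b) + cinner a b)" by simp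
    also have "\<dots> \<le> cmod (2 * (c * cinner e b) - cinner a b) + cmod (cinner a b)" by (rule norm_triangle_ineq)
    finally show ?thesis using \<open>cmod (2 * (c * cinner e b) - cinner a b) \<le> norm a * norm b\<close> by linarith
  qed
  then show ?thesis unfolding c_def by (simp add: norm_mult)
qed


instantiation prod :: (chilbert, chilbert) chilbert
begin
definition scaleC_prod :: "complex \<Rightarrow> 'a \<times> 'b \<Rightarrow> 'a \<times> 'b" where
  "scaleC_prod a x = (scaleC a (fst x), scaleC a (snd x))"
definition cinner_prod :: "'a \<times> 'b \<Rightarrow> 'a \<times> 'b \<Rightarrow> complex" where
  "cinner_prod x y = cinner (fst x) (fst y) + cinner (snd x) (snd y)"
instance proof
  fix r :: real and x y :: "'a \<times> 'b" and a b :: complex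
  show "scaleC (complex_of_real r) x = r *\<^sub>R x" by (simp add: scaleC_prod_def scaleC_of_real prod_eq_iff)
  show "scaleC a (x + y) = scaleC a x + scaleC a y" by (simp add: scaleC_prod_def scaleC_add_right)
  show "scaleC (a + b) x = scaleC a x + scaleC b x" by (simp add: scaleC_prod_def scaleC_add_left)
  show "scaleC a (scaleC b x) = scaleC (a * b) x" by (simp add: scaleC_prod_def scaleC_scaleC)
  show "scaleC 1 x = x" by (simp add: scaleC_prod_def scaleC_one)
  fix z :: "'a \<times> 'b"
  show "cinner (x + y) z = cinner x z + cinner y z" by (simp add: cinner_prod_def cinner_add_left)
  show "cinner (scaleC a x) y = a * cinner x y" by (simp add: cinner_prod_def scaleC_prod_def cinner_scaleC_left algebra_simps)
  show "cinner y x = cnj (cinner x y)" by (simp add: cinner_prod_def cinner_commute[where x="fst y"] cinner_commute[where x="snd y"])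
  show "cinner x x = complex_of_real ((norm x)^2)"
  proof -
    have "cinner x x = complex_of_real ((norm (fst x))^2 + (norm (snd x))^2)"
      by (simp add: cinner_prod_def cinner_self_norm)
    also have "(norm (fst x))^2 + (norm (snd x))^2 = (norm x)^2"
      by (metis norm_Pair prod.collapse real_sqrt_pow2 add_nonneg_nonneg zero_le_power2)
    finally show ?thesis .
  qed
qed
end

lemma cinner_Pair: "cinner (a, b) (c, d) = cinner a c + cinner b d" by (simp add: cinner_prod_def)


lemma proj_identity:
  fixes x y :: "'a::chilbert"
  assumes "y \<noteq> 0"
  shows "(norm (x - scaleC (cinner x y / complex_of_real ((norm y)^2)) y))^2
        = (norm x)^2 - (cmod (cinner x y))^2 / (norm y)^2"
proof -
  define \<nu> where "\<nu> = (norm y)^2"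
  have nu: "\<nu> > 0" using assms by (simp add: \<nu>_def)
  define c where "c = cinner x y"
  define t where "t = c / complex_of_real \<nu>"
  have "cinner (x - scaleC t y) (x - scaleC t y) =
     complex_of_real ((norm x)^2) - cnj t * c - t * cnj c + t * cnj t * complex_of_real \<nu>"
    unfolding expand_sq c_def \<nu>_def by (simp add: cinner_self_norm cinner_commute[where x=x and y=y])
  also have "\<dots> = complex_of_real ((norm x)^2) - (c * cnj c) / complex_of_real \<nu>"
    using nu unfolding t_def
    by (simp add: field_simps)
  also have "\<dots> = complex_of_real ((norm x)^2 - (cmod c)^2 / \<nu>)"
    by (simp add: complex_norm_square[symmetric])
  finally have "complex_of_real ((norm (x - scaleC t y))^2) = complex_of_real ((norm x)^2 - (cmod c)^2 / \<nu>)"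
    by (simp add: cinner_self_norm)
  then show ?thesis unfolding t_def c_def \<nu>_def by (simp only: of_real_eq_iff)
qed

lemma parallelogram:
  fixes u v :: "'a::chilbert"
  shows "(norm (u + v))^2 + (norm (u - v))^2 = 2 * (norm u)^2 + 2 * (norm v)^2"
proof -
  have "cinner (u + v) (u + v) + cinner (u - v) (u - v) = 2 * cinner u u + 2 * cinner v v"
    by (simp add: cinner_add_left cinner_add_right cinner_diff_left cinner_diff_right algebra_simps)
  then have "complex_of_real ((norm (u + v))^2 + (norm (u - v))^2) = complex_of_real (2 * (norm u)^2 + 2 * (norm v)^2)"
    by (simp add: cinner_self_norm)
  then show ?thesis by (simp only: of_real_eq_iff)
qed

lemma riesz:
  fixes f :: "'a::chilbert \<Rightarrow> complex"
  assumes add: "\<And>x y. f (x + y) = f x + f y"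
    and sc: "\<And>c x. f (scaleC c x) = c * f x"
    and bd: "\<And>x. cmod (f x) \<le> K * norm x"
  shows "\<exists>z. \<forall>x. f x = cinner x z"
proof (cases "\<forall>x. f x = 0")
  case True
  then show ?thesis by (intro exI[of _ 0]) simp
next
  case False
  then obtain x0 where fx0: "f x0 \<noteq> 0" by blast
  have f0: "f 0 = 0" using add[of 0 0] by simp
  have fdiff: "f (x - y) = f x - f y" for x y using add[of "x - y" y] by simp
  have fR: "f (r *\<^sub>R x) = r *\<^sub>R f x" for r x
    using sc[of "complex_of_real r" x] by (simp add: scaleC_of_real scaleR_conv_of_real)
  have bl: "bounded_linear f"
    by (rule bounded_linear_intro[where K=K]) (auto simp: add fR bd mult.commute)
  define N where "N = {x. f x = 0}"
  have clN: "closed N" unfolding N_def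
    by (rule closed_Collect_eq) (auto intro: linear_continuous_on bl)
  have N0: "0 \<in> N" by (simp add: N_def f0)
  define d where "d = infdist x0 N"
  have dle: "d \<le> norm (x0 - q)" if "q \<in> N" for q
    using infdist_le[OF that, of x0] by (simp add: d_def dist_norm)
  have d0: "0 \<le> d" by (simp add: d_def infdist_nonneg)
  have approx: "\<exists>a. a \<in> N \<and> dist x0 a < d + inverse (real (Suc k))" for k
  proof -
    have "N \<noteq> {}" using N0 by blast
    moreover have "bdd_below ((\<lambda>a. dist x0 a) ` N)" by (rule bdd_belowI[of _ 0]) auto
    moreover have "infdist x0 N < d + inverse (real (Suc k))" by (simp add: d_def)
    ultimately show ?thesis by (auto simp: infdist_notempty cINF_less_iff)
  qed
  then obtain n where nN: "\<And>k. n k \<in> N" and nd: "\<And>k. dist x0 (n k) < d + inverse (real (Suc k))"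
    by metis
  define e where "e k = (2 * d + 1) * inverse (real (Suc k))" for k
  have nsq: "(norm (x0 - n k))^2 \<le> d^2 + e k" for k
  proof -
    have i0: "0 < inverse (real (Suc k))" "inverse (real (Suc k)) \<le> 1" by (auto simp: inverse_le_1_iff)
    have "norm (x0 - n k) \<le> d + inverse (real (Suc k))" using nd[of k] by (simp add: dist_norm)
    then have "(norm (x0 - n k))^2 \<le> (d + inverse (real (Suc k)))^2"
      by (simp add: power_mono)
    also have "\<dots> = d^2 + 2 * d * inverse (real (Suc k)) + inverse (real (Suc k)) * inverse (real (Suc k))"
      by (simp add: power2_eq_square algebra_simps)
    also have "\<dots> \<le> d^2 + e k" unfolding e_def using i0 d0
      by (simp add: algebra_simps mult_left_le)
    finally show ?thesis .
  qed
  have Nadd: "a + b \<in> N" if "a \<in> N" "b \<in> N" for a b using that by (simp add: N_def add)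
  have NR: "r *\<^sub>R a \<in> N" if "a \<in> N" for a r using that by (simp add: N_def fR)
  have NC: "scaleC c a \<in> N" if "a \<in> N" for a c using that by (simp add: N_def sc)
  have cd: "(norm (n j - n k))^2 \<le> 2 * e j + 2 * e k" for j k
  proof -
    define u where "u = x0 - n j"
    define v where "v = x0 - n k"
    define m where "m = (1/2) *\<^sub>R (n j + n k)"
    have mN: "m \<in> N" unfolding m_def by (intro NR Nadd nN)
    have "u + v = 2 *\<^sub>R (x0 - m)" unfolding u_def v_def m_def by (simp add: algebra_simps scaleR_2)
    then have "norm (u + v) = 2 * norm (x0 - m)" by simp
    with dle[OF mN] d0 have "4 * d^2 \<le> (norm (u + v))^2"
      by (simp add: power2_eq_square mult_mono)
    moreover have "(norm (u - v))^2 = (norm (n j - n k))^2"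
      unfolding u_def v_def by (simp add: norm_minus_commute)
    moreover have "(norm u)^2 \<le> d^2 + e j" "(norm v)^2 \<le> d^2 + e k"
      unfolding u_def v_def by (rule nsq)+
    ultimately show ?thesis using parallelogram[of u v] by linarith
  qed
  have Cn: "Cauchy n"
  proof (rule CauchyI)
    fix \<epsilon> :: real assume ep: "0 < \<epsilon>"
    obtain M :: nat where M: "4 * (2 * d + 1) / \<epsilon>^2 < real M" using reals_Archimedean2 by blast
    have "4 * (2 * d + 1) < real M * \<epsilon>^2" using M ep by (simp add: field_simps)
    then have M': "4 * (2 * d + 1) * inverse (real (Suc M)) < \<epsilon>^2"
      by (simp add: field_simps) (smt (verit) ep mult_right_mono zero_le_power2)
    show "\<exists>M. \<forall>m\<ge>M. \<forall>k\<ge>M. norm (n m - n k) < \<epsilon>"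
    proof (intro exI allI impI)
      fix m k assume mk: "M \<le> m" "M \<le> k"
      have em: "e m \<le> (2 * d + 1) * inverse (real (Suc M))" "e k \<le> (2 * d + 1) * inverse (real (Suc M))"
        unfolding e_def using mk d0 by (auto intro!: mult_left_mono le_imp_inverse_le)
      have "(norm (n m - n k))^2 < \<epsilon>^2" using cd[of m k] em M' by linarith
      then show "norm (n m - n k) < \<epsilon>" using ep by (simp add: power_less_imp_less_base)
    qed
  qed
  then obtain p where np: "n \<longlonglongrightarrow> p" using Cauchy_convergent_iff convergent_def by blast
  have pN: "p \<in> N" using closed_sequentially[OF clN] nN np by blast
  have "dist x0 p \<le> d"
  proof (rule LIMSEQ_le)
    show "(\<lambda>k. dist x0 (n k)) \<longlonglongrightarrow> dist x0 p" by (intro tendsto_intros np)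
    show "(\<lambda>k. d + inverse (real (Suc k))) \<longlonglongrightarrow> d" by (rule LIMSEQ_inverse_real_of_nat_add)
    show "\<exists>N. \<forall>k\<ge>N. dist x0 (n k) \<le> d + inverse (real (Suc k))" using nd less_imp_le by blast
  qed
  define w where "w = x0 - p"
  have wd: "norm w \<le> d" using \<open>dist x0 p \<le> d\<close> by (simp add: w_def dist_norm)
  have fw: "f w = f x0" using pN by (simp add: w_def fdiff N_def)
  have wmin: "norm w \<le> norm (w - q)" if "q \<in> N" for q
  proof -
    have "w - q = x0 - (p + q)" by (simp add: w_def)
    then show ?thesis using dle[OF Nadd[OF pN that]] wd by (metis order.trans)
  qed
  have orth: "cinner w q = 0" if "q \<in> N" for q
  proof (cases "q = 0")
    case True then show ?thesis by simp
  next
    case False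
    have "norm w \<le> norm (w - scaleC (cinner w q / complex_of_real ((norm q)^2)) q)"
      by (rule wmin) (rule NC[OF that])
    then have "(norm w)^2 \<le> (norm (w - scaleC (cinner w q / complex_of_real ((norm q)^2)) q))^2"
      by (rule power_mono) simp
    then have "(cmod (cinner w q))^2 / (norm q)^2 \<le> 0" using proj_identity[OF False, of w] by linarith
    then have "(cmod (cinner w q))^2 \<le> 0" using False by (simp add: divide_le_0_iff)
    then show ?thesis by simp
  qed
  have wne: "w \<noteq> 0" using fw fx0 f0 by auto
  define \<nu> where "\<nu> = (norm w)^2"
  have nu: "\<nu> > 0" using wne by (simp add: \<nu>_def)
  define z where "z = scaleC (cnj (f w) / complex_of_real \<nu>) w"
  show ?thesis
  proof (intro exI allI)
    fix x
    define c where "c = f x / f w"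
    have "f (x - scaleC c w) = 0" unfolding c_def using fw fx0 by (simp add: fdiff sc)
    then have "cinner w (x - scaleC c w) = 0" using orth by (simp add: N_def)
    then have "cinner (x - scaleC c w) w = 0" using cnj_cinner[of w "x - scaleC c w"] by simp
    then have "cinner x w = c * complex_of_real \<nu>"
      by (simp add: cinner_diff_left cinner_scaleC_left cinner_self_norm \<nu>_def)
    then have "cinner x z = f w / complex_of_real \<nu> * (c * complex_of_real \<nu>)"
      by (simp add: z_def cinner_scaleC_right)
    also have "\<dots> = f x" using nu fw fx0 by (simp add: c_def field_simps)
    finally show "f x = cinner x z" by simp
  qed
qed

lemma adj_ex:
  fixes T :: "'a::chilbert \<Rightarrow> 'a"
  assumes "bounded_op T"
  shows "\<exists>S. \<forall>x y. cinner (T x) y = cinner x (S y)"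
proof -
  interpret T: bounded_linear T using assms by (simp add: bounded_op_def)
  have Tc: "T (scaleC a x) = scaleC a (T x)" for a x using assms by (simp add: bounded_op_def)
  obtain K where K: "\<And>x. norm (T x) \<le> norm x * K" using T.bounded by blast
  have "\<forall>y. \<exists>z. \<forall>x. cinner (T x) y = cinner x z"
  proof
    fix y
    show "\<exists>z. \<forall>x. cinner (T x) y = cinner x z"
    proof (rule riesz[where K="K * norm y"])
      show "cinner (T (x + x')) y = cinner (T x) y + cinner (T x') y" for x x'
        by (simp add: T.add cinner_add_left)
      show "cinner (T (scaleC c x)) y = c * cinner (T x) y" for c x
        by (simp add: Tc cinner_scaleC_left)
      show "cmod (cinner (T x) y) \<le> K * norm y * norm x" for x
      proof -
        have "cmod (cinner (T x) y) \<le> norm (T x) * norm y" by (rule cauchy_schwarz)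
        also have "\<dots> \<le> norm x * K * norm y" using K[of x] by (simp add: mult_right_mono)
        finally show ?thesis by (simp add: algebra_simps)
      qed
    qed
  qed
  then show ?thesis by (metis choice)
qed

lemma adj_prop:
  fixes T :: "'a::chilbert \<Rightarrow> 'a"
  assumes "bounded_op T"
  shows "cinner (T x) y = cinner x (adj T y)"
proof -
  have "\<exists>!S. \<forall>x y. cinner (T x) y = cinner x (S y)"
  proof (rule ex_ex1I)
    show "\<exists>S. \<forall>x y. cinner (T x) y = cinner x (S y)" by (rule adj_ex[OF assms])
    fix S S' assume "\<forall>x y. cinner (T x) y = cinner x (S y)" "\<forall>x y. cinner (T x) y = cinner x (S' y)"
    then show "S = S'" by (intro ext cinner_eqI) metis
  qed
  then have "\<forall>x y. cinner (T x) y = cinner x (adj T y)" unfolding adj_def by (rule theI')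
  then show ?thesis by blast
qed

lemma adj_bl:
  fixes T :: "'a::chilbert \<Rightarrow> 'a"
  assumes "bounded_op T"
  shows "bounded_linear (adj T)"
proof -
  interpret T: bounded_linear T using assms by (simp add: bounded_op_def)
  obtain K where K: "\<And>x. norm (T x) \<le> norm x * K" and Kp: "K > 0" using T.pos_bounded by blast
  note ap = adj_prop[OF assms]
  show ?thesis
  proof (rule bounded_linear_intro[where K=K])
    show "adj T (x + y) = adj T x + adj T y" for x y
      by (rule cinner_eqI) (simp add: ap[symmetric] cinner_add_right)
    show "adj T (r *\<^sub>R x) = r *\<^sub>R adj T x" for r x
      by (rule cinner_eqI) (simp add: ap[symmetric] cinner_scaleR_right)
    show "norm (adj T y) \<le> norm y * K" for y
    proof -
      define u where "u = adj T y"
      have "(norm u)^2 = Re (cinner (T u) y)" by (simp add: ap u_def cinner_self_norm)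
      also have "\<dots> \<le> cmod (cinner (T u) y)" by (rule complex_Re_le_cmod)
      also have "\<dots> \<le> norm (T u) * norm y" by (rule cauchy_schwarz)
      also have "\<dots> \<le> norm u * K * norm y" using K[of u] by (simp add: mult_right_mono)
      finally have h: "norm u * norm u \<le> norm u * (norm y * K)" by (simp add: power2_eq_square algebra_simps)
      show ?thesis
      proof (cases "norm u = 0")
        case True then show ?thesis using Kp by (simp add: u_def)
      next
        case False then show ?thesis using h unfolding u_def[symmetric] by (simp add: mult_le_cancel_left)
      qed
    qed
  qed
qed


lemma nrad_props:
  fixes T :: "'a::chilbert \<Rightarrow> 'a"
  assumes "bounded_linear T"
  shows "0 \<le> nrad T" and "cmod (cinner (T x) x) \<le> nrad T * (norm x)^2"
proof -
  interpret T: bounded_linear T by fact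
  define S where "S = insert 0 ((\<lambda>x. cmod (cinner (T x) x)) ` {x. norm x = 1})"
  have bdd: "bdd_above S"
  proof (rule bdd_aboveI[of _ "onorm T"])
    fix v assume "v \<in> S"
    then show "v \<le> onorm T" unfolding S_def
    proof (rule insertE)
      assume "v = 0" then show ?thesis using onorm_pos_le[OF assms] by simp
    next
      assume "v \<in> (\<lambda>x. cmod (cinner (T x) x)) ` {x. norm x = 1}"
      then obtain u where u: "norm u = 1" "v = cmod (cinner (T u) u)" by auto
      have "v \<le> norm (T u) * norm u" using u cauchy_schwarz[of "T u" u] by simp
      also have "\<dots> \<le> onorm T" using onorm[OF assms, of u] u by simp
      finally show ?thesis .
    qed
  qed
  have nr: "nrad T = Sup S" by (simp add: nrad_def S_def)
  show n0: "0 \<le> nrad T" unfolding nr by (rule cSup_upper[OF _ bdd]) (simp add: S_def)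
  show "cmod (cinner (T x) x) \<le> nrad T * (norm x)^2"
  proof (cases "x = 0")
    case True then show ?thesis by (simp add: T.zero)
  next
    case False
    define u where "u = (1 / norm x) *\<^sub>R x"
    have nu: "norm u = 1" using False by (simp add: u_def)
    have "cinner (T u) u = complex_of_real (1 / norm x) * (complex_of_real (1 / norm x) * cinner (T x) x)"
      by (simp add: u_def T.scaleR cinner_scaleR_left cinner_scaleR_right)
    then have "cmod (cinner (T u) u) = cmod (cinner (T x) x) / (norm x)^2"
      using False by (simp add: norm_mult norm_divide power2_eq_square)
    moreover have "cmod (cinner (T u) u) \<le> nrad T" unfolding nr
      by (rule cSup_upper[OF _ bdd]) (use nu in \<open>auto simp: S_def\<close>)
    ultimately show ?thesis using False by (simp add: divide_le_eq)
  qed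
qed

lemma onorm_re:
  fixes T :: "'a::chilbert \<Rightarrow> 'a"
  assumes "bounded_linear T"
  shows "Re (cinner (T x) x) \<le> onorm T * (norm x)^2"
proof -
  have "Re (cinner (T x) x) \<le> cmod (cinner (T x) x)" by (rule complex_Re_le_cmod)
  also have "\<dots> \<le> norm (T x) * norm x" by (rule cauchy_schwarz)
  also have "\<dots> \<le> onorm T * norm x * norm x" using onorm[OF assms, of x] by (simp add: mult_right_mono)
  finally show ?thesis by (simp add: power2_eq_square mult.assoc)
qed

lemma selfadj_sq:
  fixes P :: "'a::chilbert \<Rightarrow> 'a"
  assumes "\<And>u v. cinner (P u) v = cinner u (P v)"
  shows "cinner (P (P x)) x = complex_of_real ((norm (P x))^2)"
  using assms[of "P x" x] by (simp add: cinner_self_norm)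

lemma abs_sq_props:
  fixes B :: "'a::chilbert \<Rightarrow> 'a"
  assumes "bounded_op B"
  shows "cinner (abs_sq B x) x = complex_of_real ((norm (B x))^2)"
    and "cinner (abs_adj_sq B x) x = complex_of_real ((norm (adj B x))^2)"
    and "cinner (abs_sq B u) v = cinner u (abs_sq B v)"
    and "cinner (abs_adj_sq B u) v = cinner u (abs_adj_sq B v)"
    and "bounded_linear (abs_sq B)"
    and "bounded_linear (abs_adj_sq B)"
proof -
  note ap = adj_prop[OF assms]
  have bl: "bounded_linear B" using assms by (simp add: bounded_op_def)
  have bla: "bounded_linear (adj B)" by (rule adj_bl[OF assms])
  show "cinner (abs_sq B x) x = complex_of_real ((norm (B x))^2)"
  proof -
    have "cinner x (adj B (B x)) = complex_of_real ((norm (B x))^2)"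
      using ap[of x "B x"] by (simp add: cinner_self_norm)
    then have "cnj (cinner x (adj B (B x))) = complex_of_real ((norm (B x))^2)" by simp
    then show ?thesis using cnj_cinner[of x "adj B (B x)"] by (simp add: abs_sq_def)
  qed
  show "cinner (abs_adj_sq B x) x = complex_of_real ((norm (adj B x))^2)"
    using ap[of "adj B x" x] by (simp add: abs_adj_sq_def cinner_self_norm)
  show "cinner (abs_sq B u) v = cinner u (abs_sq B v)"
    using ap[of u "B v"] ap[of v "B u"] cnj_cinner[of v "adj B (B u)"] cnj_cinner[of "B v" "B u"]
    by (simp add: abs_sq_def)
  show "cinner (abs_adj_sq B u) v = cinner u (abs_adj_sq B v)"
    using ap[of "adj B u" v] ap[of "adj B v" u] cnj_cinner[of "B (adj B v)" u] cnj_cinner[of "adj B v" "adj B u"]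
    by (simp add: abs_adj_sq_def)
  show "bounded_linear (abs_sq B)" unfolding abs_sq_def comp_def by (rule bounded_linear_compose[OF bla bl])
  show "bounded_linear (abs_adj_sq B)" unfolding abs_adj_sq_def comp_def by (rule bounded_linear_compose[OF bl bla])
qed

lemma fourth_power: fixes m t :: real assumes "0 \<le> m" "0 \<le> t"
  shows "(m + t)^4 \<le> 8 * m^4 + 8 * t^4"
proof -
  have e1: "(m + t)^2 = 2 * (m^2 + t^2) - (m - t)^2" by (simp add: power2_eq_square algebra_simps)
  have "(m + t)^2 \<le> 2 * (m^2 + t^2)" unfolding e1 by simp
  then have "((m + t)^2)^2 \<le> (2 * (m^2 + t^2))^2" by (rule power_mono) simp
  also have "(2 * (m^2 + t^2))^2 = 8 * m^4 + 8 * t^4 - 4 * (m^2 - t^2)^2"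
    by (simp add: power2_eq_square power4_eq_xxxx algebra_simps)
  also have "\<dots> \<le> 8 * m^4 + 8 * t^4" by simp
  finally show ?thesis by simp
qed


lemma bl_op_plus: "bounded_linear f \<Longrightarrow> bounded_linear g \<Longrightarrow> bounded_linear (op_plus f g)"
  unfolding op_plus_def by (rule bounded_linear_add)

lemma bl_comp: "bounded_linear f \<Longrightarrow> bounded_linear g \<Longrightarrow> bounded_linear (f \<circ> g)"
  unfolding comp_def by (rule bounded_linear_compose)

lemma norm_Pair_sq: "(norm (a, b))^2 = (norm a)^2 + (norm b)^2"
  by (simp add: norm_Pair)

lemma max_pow_nonneg: fixes a b :: real assumes "0 \<le> a" "0 \<le> b"
  shows "(max a b)^n = max (a^n) (b^n)"
  using assms by (cases "a \<le> b") (auto simp: max_def power_mono intro: antisym dest: power_mono[of _ _ n])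

lemma vec_bound:
  fixes A B C D :: "'a::chilbert \<Rightarrow> 'a" and \<alpha> :: real and x1 x2 :: 'a
  assumes bA: "bounded_op A" and bB: "bounded_op B" and bC: "bounded_op C" and bD: "bounded_op D"
    and a0: "0 \<le> \<alpha>" and a1: "\<alpha> \<le> 1"
    and unit: "(norm x1)^2 + (norm x2)^2 = 1"
  shows "(cmod (cinner (A x1 + B x2) x1 + cinner (C x1 + D x2) x2))^4
    \<le> 8 * max ((nrad A) ^ 4) ((nrad D) ^ 4)
      + (1 + \<alpha>) * max
          (onorm (op_plus (abs_sq B \<circ> abs_sq B) (abs_adj_sq C \<circ> abs_adj_sq C)))
          (onorm (op_plus (abs_adj_sq B \<circ> abs_adj_sq B) (abs_sq C \<circ> abs_sq C)))
      + 2 * (1 - \<alpha>) * max ((nrad (B \<circ> C)) ^ 2) ((nrad (C \<circ> B)) ^ 2)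
      + 2 * max (onorm (op_plus (abs_sq B) (abs_adj_sq C)))
                (onorm (op_plus (abs_adj_sq B) (abs_sq C)))
          * max (nrad (B \<circ> C)) (nrad (C \<circ> B))"
proof -
  have blA: "bounded_linear A" using bA by (simp add: bounded_op_def)
  have blB: "bounded_linear B" using bB by (simp add: bounded_op_def)
  have blC: "bounded_linear C" using bC by (simp add: bounded_op_def)
  have blD: "bounded_linear D" using bD by (simp add: bounded_op_def)
  note apB = adj_prop[OF bB] and apC = adj_prop[OF bC]
  note sB = abs_sq_props[OF bB] and sC = abs_sq_props[OF bC]
  define s1 where "s1 = (norm x1)^2"
  define s2 where "s2 = (norm x2)^2"
  have s1p: "0 \<le> s1" and s2p: "0 \<le> s2" and s12: "s1 + s2 = 1" using unit by (auto simp: s1_def s2_def)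
  define nA where "nA = nrad A"
  define nD where "nD = nrad D"
  define m where "m = max nA nD"
  define N4a where "N4a = onorm (op_plus (abs_sq B \<circ> abs_sq B) (abs_adj_sq C \<circ> abs_adj_sq C))"
  define N4b where "N4b = onorm (op_plus (abs_adj_sq B \<circ> abs_adj_sq B) (abs_sq C \<circ> abs_sq C))"
  define N2a where "N2a = onorm (op_plus (abs_sq B) (abs_adj_sq C))"
  define N2b where "N2b = onorm (op_plus (abs_adj_sq B) (abs_sq C))"
  define WBC where "WBC = nrad (B \<circ> C)"
  define WCB where "WCB = nrad (C \<circ> B)"
  define M4 where "M4 = max N4a N4b"
  define M2 where "M2 = max N2a N2b"
  define W where "W = max WBC WCB"
  have nA0: "0 \<le> nA" and nD0: "0 \<le> nD" using nrad_props(1)[OF blA] nrad_props(1)[OF blD] by (auto simp: nA_def nD_def)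
  have m0: "0 \<le> m" using nA0 by (simp add: m_def)
  have WBC0: "0 \<le> WBC" and WCB0: "0 \<le> WCB"
    using nrad_props(1)[OF bl_comp[OF blB blC]] nrad_props(1)[OF bl_comp[OF blC blB]] by (auto simp: WBC_def WCB_def)
  have W0: "0 \<le> W" using WBC0 by (simp add: W_def)
  define a where "a = cinner (A x1) x1 + cinner (D x2) x2"
  define s where "s = cinner (B x2) x1 + cinner (C x1) x2"
  have val: "cinner (A x1 + B x2) x1 + cinner (C x1 + D x2) x2 = a + s"
    by (simp add: a_def s_def cinner_add_left)
  have ha: "cmod a \<le> m"
  proof -
    have "cmod a \<le> cmod (cinner (A x1) x1) + cmod (cinner (D x2) x2)" unfolding a_def by (rule norm_triangle_ineq)
    also have "\<dots> \<le> nA * s1 + nD * s2"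
      using nrad_props(2)[OF blA, of x1] nrad_props(2)[OF blD, of x2] by (simp add: nA_def nD_def s1_def s2_def)
    also have "\<dots> \<le> m * s1 + m * s2"
      using s1p s2p by (intro add_mono mult_right_mono) (auto simp: m_def)
    also have "\<dots> = m" using s12 distrib_left[of m s1 s2] by simp
    finally show ?thesis .
  qed
  \<comment> \<open>off-diagonal part, via Buzano in the direct sum\<close>
  define pe where "pe = (x1, x2)"
  define pa where "pa = (B x2, C x1)"
  define pb where "pb = (adj C x2, adj B x1)"
  have npe: "norm pe = 1" using unit by (simp add: pe_def norm_Pair)
  have ipa: "cinner pa pe = s" by (simp add: pa_def pe_def s_def cinner_Pair)
  have ipb: "cinner pe pb = s" by (simp add: pb_def pe_def s_def cinner_Pair apC[symmetric] apB[symmetric])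
  have buz: "2 * cmod (s * s) \<le> norm pa * norm pb + cmod (cinner pa pb)"
    using buzano[OF npe, of pa pb] ipa ipb by simp
  define g where "g = cmod (cinner pa pb)"
  define r where "r = norm pa * norm pb"
  have r0: "0 \<le> r" by (simp add: r_def)
  have g0: "0 \<le> g" by (simp add: g_def)
  have gr: "g \<le> r" unfolding g_def r_def by (rule cauchy_schwarz)
  have gW: "g \<le> W"
  proof -
    have "cinner pa pb = cinner ((C \<circ> B) x2) x2 + cinner ((B \<circ> C) x1) x1"
      by (simp add: pa_def pb_def cinner_Pair apC apB)
    then have "g \<le> cmod (cinner ((C \<circ> B) x2) x2) + cmod (cinner ((B \<circ> C) x1) x1)"
      unfolding g_def by (simp add: norm_triangle_ineq)
    also have "\<dots> \<le> WCB * s2 + WBC * s1"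
      using nrad_props(2)[OF bl_comp[OF blC blB], of x2] nrad_props(2)[OF bl_comp[OF blB blC], of x1]
      by (simp add: WBC_def WCB_def s1_def s2_def)
    also have "\<dots> \<le> W * s2 + W * s1"
      using s1p s2p by (intro add_mono mult_right_mono) (auto simp: W_def)
    also have "\<dots> = W" using s12 distrib_left[of W s2 s1] by (simp add: add.commute)
    finally show ?thesis .
  qed
  define p where "p = (norm pa)^2"
  define q where "q = (norm pb)^2"
  have p_eq: "p = (norm (B x2))^2 + (norm (C x1))^2" by (simp add: p_def pa_def norm_Pair_sq)
  have q_eq: "q = (norm (adj C x2))^2 + (norm (adj B x1))^2" by (simp add: q_def pb_def norm_Pair_sq)
  have p0: "0 \<le> p" and q0: "0 \<le> q" by (simp_all add: p_def q_def)
  have pq2: "p + q \<le> M2"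
  proof -
    have e2: "Re (cinner (op_plus (abs_sq B) (abs_adj_sq C) x2) x2) = (norm (B x2))^2 + (norm (adj C x2))^2"
      by (simp add: op_plus_def cinner_add_left sB(1) sC(2))
    have e1: "Re (cinner (op_plus (abs_adj_sq B) (abs_sq C) x1) x1) = (norm (adj B x1))^2 + (norm (C x1))^2"
      by (simp add: op_plus_def cinner_add_left sB(2) sC(1))
    have "(norm (B x2))^2 + (norm (adj C x2))^2 \<le> N2a * s2"
      using onorm_re[OF bl_op_plus[OF sB(5) sC(6)], of x2] e2 by (simp add: N2a_def s2_def)
    moreover have "(norm (adj B x1))^2 + (norm (C x1))^2 \<le> N2b * s1"
      using onorm_re[OF bl_op_plus[OF sB(6) sC(5)], of x1] e1 by (simp add: N2b_def s1_def)
    moreover have "N2a * s2 + N2b * s1 \<le> M2 * s2 + M2 * s1"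
      using s1p s2p by (intro add_mono mult_right_mono) (auto simp: M2_def)
    moreover have "M2 * s2 + M2 * s1 = M2" using s12 distrib_left[of M2 s2 s1] by (simp add: add.commute)
    ultimately show ?thesis using p_eq q_eq by linarith
  qed
  have pq4: "p^2 + q^2 \<le> M4"
  proof -
    define va where "va = (abs_sq C x1, abs_sq B x2)"
    define vb where "vb = (abs_adj_sq B x1, abs_adj_sq C x2)"
    have "cinner va pe = complex_of_real p" by (simp add: va_def pe_def cinner_Pair sB(1) sC(1) p_eq)
    then have "p \<le> norm va" using cauchy_schwarz[of va pe] npe p0 by simp
    then have hp: "p^2 \<le> (norm (abs_sq C x1))^2 + (norm (abs_sq B x2))^2"
      using p0 by (metis norm_Pair_sq power_mono va_def)
    have "cinner vb pe = complex_of_real q" by (simp add: vb_def pe_def cinner_Pair sB(2) sC(2) q_eq)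
    then have "q \<le> norm vb" using cauchy_schwarz[of vb pe] npe q0 by simp
    then have hq: "q^2 \<le> (norm (abs_adj_sq B x1))^2 + (norm (abs_adj_sq C x2))^2"
      using q0 by (metis norm_Pair_sq power_mono vb_def)
    have e2: "Re (cinner (op_plus (abs_sq B \<circ> abs_sq B) (abs_adj_sq C \<circ> abs_adj_sq C) x2) x2)
        = (norm (abs_sq B x2))^2 + (norm (abs_adj_sq C x2))^2"
      by (simp add: op_plus_def cinner_add_left selfadj_sq[OF sB(3)] selfadj_sq[OF sC(4)])
    have e1: "Re (cinner (op_plus (abs_adj_sq B \<circ> abs_adj_sq B) (abs_sq C \<circ> abs_sq C) x1) x1)
        = (norm (abs_adj_sq B x1))^2 + (norm (abs_sq C x1))^2"
      by (simp add: op_plus_def cinner_add_left selfadj_sq[OF sB(4)] selfadj_sq[OF sC(3)])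
    have "(norm (abs_sq B x2))^2 + (norm (abs_adj_sq C x2))^2 \<le> N4a * s2"
      using onorm_re[OF bl_op_plus[OF bl_comp[OF sB(5) sB(5)] bl_comp[OF sC(6) sC(6)]], of x2] e2
      by (simp add: N4a_def s2_def)
    moreover have "(norm (abs_adj_sq B x1))^2 + (norm (abs_sq C x1))^2 \<le> N4b * s1"
      using onorm_re[OF bl_op_plus[OF bl_comp[OF sB(6) sB(6)] bl_comp[OF sC(5) sC(5)]], of x1] e1
      by (simp add: N4b_def s1_def)
    moreover have "N4a * s2 + N4b * s1 \<le> M4 * s2 + M4 * s1"
      using s1p s2p by (intro add_mono mult_right_mono) (auto simp: M4_def)
    moreover have "M4 * s2 + M4 * s1 = M4" using s12 distrib_left[of M4 s2 s1] by (simp add: add.commute)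
    ultimately show ?thesis using hp hq by linarith
  qed
  have r2: "2 * r \<le> M2"
  proof -
    have "0 \<le> (norm pa - norm pb)^2" by simp
    then have "2 * r \<le> p + q" by (simp add: r_def p_def q_def power2_eq_square algebra_simps)
    then show ?thesis using pq2 by linarith
  qed
  have r4: "2 * r^2 \<le> M4"
  proof -
    have "0 \<le> (p - q)^2" by simp
    then have "2 * (p * q) \<le> p^2 + q^2" by (simp add: power2_eq_square algebra_simps)
    moreover have "r^2 = p * q" by (simp add: r_def p_def q_def power_mult_distrib)
    ultimately show ?thesis using pq4 by linarith
  qed
  define t where "t = cmod s"
  have t0: "0 \<le> t" by (simp add: t_def)
  have t2: "2 * t^2 \<le> r + g" using buz by (simp add: t_def r_def g_def norm_mult power2_eq_square)
  have t4: "8 * t^4 \<le> 2 * (r + g)^2"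
  proof -
    have "(2 * t^2)^2 \<le> (r + g)^2" using t2 t0 by (intro power_mono) auto
    then show ?thesis by (simp add: power2_eq_square power4_eq_xxxx algebra_simps)
  qed
  have gg: "g^2 \<le> \<alpha> * r^2 + (1 - \<alpha>) * W^2"
  proof -
    have "g^2 \<le> r^2" using g0 gr by (simp add: power_mono)
    moreover have "g^2 \<le> W^2" using g0 gW by (simp add: power_mono)
    ultimately have "\<alpha> * g^2 \<le> \<alpha> * r^2" "(1 - \<alpha>) * g^2 \<le> (1 - \<alpha>) * W^2"
      using a0 a1 by (auto intro: mult_left_mono)
    then show ?thesis by (simp add: algebra_simps)
  qed
  have rg: "2 * r * g \<le> M2 * W"
  proof -
    have "(2 * r) * g \<le> M2 * W" using r2 gW r0 g0 by (intro mult_mono) auto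
    then show ?thesis by simp
  qed
  have ar4: "2 * \<alpha> * r^2 \<le> \<alpha> * M4"
  proof -
    have "\<alpha> * (2 * r^2) \<le> \<alpha> * M4" using r4 a0 by (rule mult_left_mono)
    then show ?thesis by (simp add: algebra_simps)
  qed
  have off: "8 * t^4 \<le> (1 + \<alpha>) * M4 + 2 * (1 - \<alpha>) * W^2 + 2 * M2 * W"
  proof -
    have "2 * (r + g)^2 = 2 * r^2 + 2 * (2 * r * g) + 2 * g^2" by (simp add: power2_eq_square algebra_simps)
    also have "\<dots> \<le> M4 + 2 * (M2 * W) + 2 * (\<alpha> * r^2 + (1 - \<alpha>) * W^2)"
      using r4 rg gg by (intro add_mono mult_left_mono) simp_all
    also have "\<dots> \<le> (1 + \<alpha>) * M4 + 2 * (1 - \<alpha>) * W^2 + 2 * M2 * W"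
      using ar4 by (simp add: algebra_simps)
    finally show ?thesis using t4 by linarith
  qed
  have v: "cmod (a + s) \<le> m + t" using norm_triangle_ineq[of a s] ha by (simp add: t_def)
  have "(cmod (a + s))^4 \<le> (m + t)^4" using v by (intro power_mono) auto
  also have "\<dots> \<le> 8 * m^4 + 8 * t^4" by (rule fourth_power[OF m0 t0])
  finally have fin: "(cmod (a + s))^4 \<le> 8 * m^4 + ((1 + \<alpha>) * M4 + 2 * (1 - \<alpha>) * W^2 + 2 * M2 * W)"
    using off by linarith
  have m4: "m^4 = max ((nrad A) ^ 4) ((nrad D) ^ 4)"
    unfolding m_def nA_def nD_def by (rule max_pow_nonneg) (use nA0 nD0 in \<open>auto simp: nA_def nD_def\<close>)
  have W2: "W^2 = max ((nrad (B \<circ> C)) ^ 2) ((nrad (C \<circ> B)) ^ 2)"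
    unfolding W_def WBC_def WCB_def by (rule max_pow_nonneg) (use WBC0 WCB0 in \<open>auto simp: WBC_def WCB_def\<close>)
  show ?thesis using fin unfolding val m4 W2
    by (simp add: M4_def N4a_def N4b_def M2_def N2a_def N2b_def W_def WBC_def WCB_def algebra_simps)
qed


theorem mainTheorem12:
  fixes A B C D :: "'a::chilbert \<Rightarrow> 'a" and \<alpha> :: real
  assumes "bounded_op A" and "bounded_op B" and "bounded_op C" and "bounded_op D"
    and "0 \<le> \<alpha>" and "\<alpha> \<le> 1"
  shows "(block_nrad A B C D) ^ 4
    \<le> 8 * max ((nrad A) ^ 4) ((nrad D) ^ 4)
      + (1 + \<alpha>) * max
          (onorm (op_plus (abs_sq B \<circ> abs_sq B) (abs_adj_sq C \<circ> abs_adj_sq C)))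
          (onorm (op_plus (abs_adj_sq B \<circ> abs_adj_sq B) (abs_sq C \<circ> abs_sq C)))
      + 2 * (1 - \<alpha>) * max ((nrad (B \<circ> C)) ^ 2) ((nrad (C \<circ> B)) ^ 2)
      + 2 * max (onorm (op_plus (abs_sq B) (abs_adj_sq C)))
                (onorm (op_plus (abs_adj_sq B) (abs_sq C)))
          * max (nrad (B \<circ> C)) (nrad (C \<circ> B))"
  (is "_ \<le> ?R")
proof -
  have blA: "bounded_linear A" and blB: "bounded_linear B" and blC: "bounded_linear C" and blD: "bounded_linear D"
    using assms by (simp_all add: bounded_op_def)
  note sB = abs_sq_props[OF assms(2)] and sC = abs_sq_props[OF assms(3)]
  have o1: "0 \<le> onorm (op_plus (abs_sq B \<circ> abs_sq B) (abs_adj_sq C \<circ> abs_adj_sq C))"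
    by (rule onorm_pos_le[OF bl_op_plus[OF bl_comp[OF sB(5) sB(5)] bl_comp[OF sC(6) sC(6)]]])
  have o2: "0 \<le> onorm (op_plus (abs_sq B) (abs_adj_sq C))"
    by (rule onorm_pos_le[OF bl_op_plus[OF sB(5) sC(6)]])
  have n1: "0 \<le> nrad A" by (rule nrad_props(1)[OF blA])
  have n2: "0 \<le> nrad (B \<circ> C)" by (rule nrad_props(1)[OF bl_comp[OF blB blC]])
  have R0: "0 \<le> ?R"
  proof -
    have "0 \<le> 8 * max ((nrad A) ^ 4) ((nrad D) ^ 4)" using n1 by (simp add: le_max_iff_disj)
    moreover have "0 \<le> (1 + \<alpha>) * max
          (onorm (op_plus (abs_sq B \<circ> abs_sq B) (abs_adj_sq C \<circ> abs_adj_sq C)))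
          (onorm (op_plus (abs_adj_sq B \<circ> abs_adj_sq B) (abs_sq C \<circ> abs_sq C)))"
      using o1 assms(5) by (intro mult_nonneg_nonneg) (auto simp: le_max_iff_disj)
    moreover have "0 \<le> 2 * (1 - \<alpha>) * max ((nrad (B \<circ> C)) ^ 2) ((nrad (C \<circ> B)) ^ 2)"
      using assms(6) by (intro mult_nonneg_nonneg) (auto simp: le_max_iff_disj)
    moreover have "0 \<le> 2 * max (onorm (op_plus (abs_sq B) (abs_adj_sq C)))
                (onorm (op_plus (abs_adj_sq B) (abs_sq C)))
          * max (nrad (B \<circ> C)) (nrad (C \<circ> B))"
      using o2 n2 by (intro mult_nonneg_nonneg) (auto simp: le_max_iff_disj)
    ultimately show ?thesis by linarith
  qed
  define X where "X = insert 0
     ((\<lambda>(x1, x2). cmod (cinner (A x1 + B x2) x1 + cinner (C x1 + D x2) x2))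
        ` {(x1, x2). (norm x1)\<^sup>2 + (norm x2)\<^sup>2 = 1})"
  have bn: "block_nrad A B C D = Sup X" by (simp add: block_nrad_def X_def)
  define \<rho> where "\<rho> = root 4 ?R"
  have \<rho>0: "0 \<le> \<rho>" using R0 by (simp add: \<rho>_def)
  have \<rho>4: "\<rho> ^ 4 = ?R" using R0 by (simp add: \<rho>_def)
  have le: "v \<le> \<rho>" if "v \<in> X" for v
  proof -
    have "0 \<le> v \<and> v ^ 4 \<le> ?R"
      using that unfolding X_def
    proof (rule insertE)
      assume "v = 0" then show ?thesis using R0 by simp
    next
      assume "v \<in> (\<lambda>(x1, x2). cmod (cinner (A x1 + B x2) x1 + cinner (C x1 + D x2) x2))
        ` {(x1, x2). (norm x1)\<^sup>2 + (norm x2)\<^sup>2 = 1}"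
      then obtain x1 x2 where u: "(norm x1)^2 + (norm x2)^2 = 1"
        and v: "v = cmod (cinner (A x1 + B x2) x1 + cinner (C x1 + D x2) x2)" by auto
      show ?thesis using vec_bound[OF assms u] v by simp
    qed
    then have "v ^ 4 \<le> \<rho> ^ 4" "0 \<le> v" using \<rho>4 by auto
    then show ?thesis using \<rho>0 power_mono_iff[of v \<rho> 4] by simp
  qed
  have bdd: "bdd_above X" using le by (rule bdd_aboveI)
  have S0: "0 \<le> Sup X" by (rule cSup_upper[OF _ bdd]) (simp add: X_def)
  have "Sup X \<le> \<rho>"
  proof (rule cSup_least)
    show "X \<noteq> {}" by (simp add: X_def)
  next
    fix v assume "v \<in> X" then show "v \<le> \<rho>" by (rule le)
  qed
  then have "(Sup X) ^ 4 \<le> \<rho> ^ 4" using S0 by (intro power_mono) auto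
  then show ?thesis unfolding bn \<rho>4 .
qed

end
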